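(* Let $P=P_1\cdots P_p$ and $T=T_1\cdots T_t$ be strings over a finite alphabet $\Sigma$, and let $R_U^j,R_M^j$ be the vectors computed by the GSM recurrence described in the context. For every $j\in\{1,\dots,t\}$ we have $(R_U^j)_p=1$ or $(R_M^j)_p=1$ if and only if $j\ge p$ and $P$ swap matches $T$ at location $j-p+1$. Equivalently, the GSM algorithm, which at step $j$ reports a match at position $j-p+1$ exactly when $(R_U^j)_p=1$ or $(R_M^j)_p=1$, reports precisely all locations at which $P$ swap matches $T$.
   Context: Strings: for a string $S$, $S_i$ is its $i$-th symbol and $S_{[i,j]}=S_iS_{i+1}\cdots S_j$. A swap permutation for a string $S$ of length $n$ is a permutation $\pi$ of $\{1,\dots,n\}$ such that (i) if $\pi(i)=j$ then $\pi(j)=i$; (ii) $\pi(i)\in\{i-1,i,i+1\}$ for all $i$; (iii) if $\pi(i)\neq i$ then $S_{\pi(i)}\neq S_i$. The swapped version is $\pi(S)=S_{\pi(1)}S_{\pi(2)}\cdots S_{\pi(n)}$. The pattern $P$ swap matches the text $T$ at location $i$ if there is a swap permutation $\pi$ for $P$ with $\pi(P)=T_{[i,i+p-1]}$. Bit vectors: all vectors below are elements of $\{0,1\}^p$ with entries indexed $1,\dots,p$; $\mid$ and $\&$ are bitwise OR and AND. $\mathit{LShift}(x)_1=0$ and $\mathit{LShift}(x)_i=x_{i-1}$ for $2\le i\le p$; $\mathit{RShift}(x)_i=x_{i+1}$ for $1\le i\le p-1$ and $\mathit{RShift}(x)_p=0$; $\mathit{LSO}(x)=\mathit{LShift}(x)\mid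 e_1$, where $e_1$ has a $1$ in entry $1$ and $0$ elsewhere. Masks: for $x\in\Sigma$, $D^x_i=1$ iff $P_i=x$. GSM recurrence: $R_U^0=R_M^0=R_D^0=0^p$, and for $j=1,\dots,t$: $R_U'^{\,j}=\mathit{LSO}(R_D^{j-1})$, $R_M'^{\,j}=R_D'^{\,j}=\mathit{LSO}(R_M^{j-1}\mid R_U^{j-1})$, $R_U^{j}=R_U'^{\,j}\ \&\ \mathit{LShift}(D^{T_j})$, $R_M^{j}=R_M'^{\,j}\ \&\ D^{T_j}$, $R_D^{j}=R_D'^{\,j}\ \&\ \mathit{RShift}(D^{T_j})$. *)

theory Defs
  imports Main
begin

(* Strings are represented 1-indexed: a string S of length n is a function
   S :: nat => 'a, where only S 1, ..., S n are relevant. *)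

definition swap_perm :: "(nat \<Rightarrow> 'a) \<Rightarrow> nat \<Rightarrow> (nat \<Rightarrow> nat) \<Rightarrow> bool" where
  "swap_perm S n \<pi> \<longleftrightarrow>
     bij_betw \<pi> {1..n} {1..n} \<and>
     (\<forall>i\<in>{1..n}. \<forall>j\<in>{1..n}. \<pi> i = j \<longrightarrow> \<pi> j = i) \<and>
     (\<forall>i\<in>{1..n}. \<pi> i = i - 1 \<or> \<pi> i = i \<or> \<pi> i = i + 1) \<and>
     (\<forall>i\<in>{1..n}. \<pi> i \<noteq> i \<longrightarrow> S (\<pi> i) \<noteq> S i)"

definition swap_match :: "(nat \<Rightarrow> 'a) \<Rightarrow> nat \<Rightarrow> (nat \<Rightarrow> 'a) \<Rightarrow> nat \<Rightarrow> bool" where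
  "swap_match P p T i \<longleftrightarrow>
     (\<exists>\<pi>. swap_perm P p \<pi> \<and> (\<forall>k\<in>{1..p}. P (\<pi> k) = T (i + k - 1)))"

(* Bit vectors in {0,1}^p, entries indexed 1..p; represented as nat => bool,
   normalized to False outside {1..p}. *)
type_synonym bv = "nat \<Rightarrow> bool"

definition bor :: "bv \<Rightarrow> bv \<Rightarrow> bv" where "bor x y = (\<lambda>i. x i \<or> y i)"
definition band :: "bv \<Rightarrow> bv \<Rightarrow> bv" where "band x y = (\<lambda>i. x i \<and> y i)"

definition LShift :: "nat \<Rightarrow> bv \<Rightarrow> bv" where
  "LShift p x = (\<lambda>i. 2 \<le> i \<and> i \<le> p \<and> x (i - 1))"
definition RShift :: "nat \<Rightarrow> bv \<Rightarrow> bv" where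
  "RShift p x = (\<lambda>i. 1 \<le> i \<and> i \<le> p - 1 \<and> x (i + 1))"
definition e1 :: "nat \<Rightarrow> bv" where "e1 p = (\<lambda>i. i = 1 \<and> 1 \<le> p)"
definition LSO :: "nat \<Rightarrow> bv \<Rightarrow> bv" where "LSO p x = bor (LShift p x) (e1 p)"

definition mask :: "(nat \<Rightarrow> 'a) \<Rightarrow> nat \<Rightarrow> 'a \<Rightarrow> bv" where
  "mask P p c = (\<lambda>i. 1 \<le> i \<and> i \<le> p \<and> P i = c)"

fun gsm :: "(nat \<Rightarrow> 'a) \<Rightarrow> nat \<Rightarrow> (nat \<Rightarrow> 'a) \<Rightarrow> nat \<Rightarrow> bv \<times> bv \<times> bv" where
  "gsm P p T 0 = (\<lambda>_. False, \<lambda>_. False, \<lambda>_. False)"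
| "gsm P p T (Suc j) =
     (let (RU, RM, RD) = gsm P p T j;
          D = mask P p (T (Suc j));
          RU' = LSO p RD;
          RM' = LSO p (bor RM RU);
          RD' = LSO p (bor RM RU)
      in (band RU' (LShift p D), band RM' D, band RD' (RShift p D)))"

definition RU :: "(nat \<Rightarrow> 'a) \<Rightarrow> nat \<Rightarrow> (nat \<Rightarrow> 'a) \<Rightarrow> nat \<Rightarrow> bv" where
  "RU P p T j = fst (gsm P p T j)"
definition RM :: "(nat \<Rightarrow> 'a) \<Rightarrow> nat \<Rightarrow> (nat \<Rightarrow> 'a) \<Rightarrow> nat \<Rightarrow> bv" where
  "RM P p T j = fst (snd (gsm P p T j))"
definition RD :: "(nat \<Rightarrow> 'a) \<Rightarrow> nat \<Rightarrow> (nat \<Rightarrow> 'a) \<Rightarrow> nat \<Rightarrow> bv" where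
  "RD P p T j = snd (snd (gsm P p T j))"

end

theory Submission
  imports Defs
begin

fun MM :: "(nat \<Rightarrow> 'a) \<Rightarrow> (nat \<Rightarrow> 'a) \<Rightarrow> nat \<Rightarrow> nat \<Rightarrow> bool" where
  "MM P T 0 j = True"
| "MM P T (Suc 0) j = (1 \<le> j \<and> P 1 = T j)"
| "MM P T (Suc (Suc k)) j = (Suc (Suc k) \<le> j \<and>
     ((MM P T (Suc k) (j - 1) \<and> P (Suc (Suc k)) = T j) \<or>
      (MM P T k (j - 2) \<and> P (Suc k) = T j \<and> P (Suc (Suc k)) = T (j - 1))))"

lemma MM_Suc: "MM P T (Suc k) j = (Suc k \<le> j \<and> ((MM P T k (j - 1) \<and> P (Suc k) = T j) \<or>
   (k \<ge> 1 \<and> MM P T (k - 1) (j - 2) \<and> P k = T j \<and> P (Suc k) = T (j - 1))))"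
  by (cases k) auto

declare MM.simps(2,3)[simp del]

definition sp :: "(nat \<Rightarrow> 'a) \<Rightarrow> nat \<Rightarrow> (nat \<Rightarrow> nat) \<Rightarrow> bool" where
  "sp S n \<pi> \<longleftrightarrow> (\<forall>i\<in>{1..n}. \<pi> i \<in> {1..n} \<and> \<pi> (\<pi> i) = i \<and>
      (\<pi> i = i - 1 \<or> \<pi> i = i \<or> \<pi> i = i + 1) \<and> (\<pi> i \<noteq> i \<longrightarrow> S (\<pi> i) \<noteq> S i))"

lemma swap_perm_sp: "swap_perm S n \<pi> = sp S n \<pi>"
proof
  assume a: "swap_perm S n \<pi>"
  hence b: "bij_betw \<pi> {1..n} {1..n}" by (simp add: swap_perm_def)
  show "sp S n \<pi>" unfolding sp_def
  proof
    fix i assume i: "i \<in> {1..n}"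
    have "\<pi> i \<in> {1..n}" using b i bij_betwE by blast
    with a i show "\<pi> i \<in> {1..n} \<and> \<pi> (\<pi> i) = i \<and>
      (\<pi> i = i - 1 \<or> \<pi> i = i \<or> \<pi> i = i + 1) \<and> (\<pi> i \<noteq> i \<longrightarrow> S (\<pi> i) \<noteq> S i)"
      unfolding swap_perm_def by blast
  qed
next
  assume a: "sp S n \<pi>"
  have "bij_betw \<pi> {1..n} {1..n}"
    by (rule bij_betw_byWitness[where f'=\<pi>]) (use a in \<open>auto simp: sp_def\<close>)
  with a show "swap_perm S n \<pi>" unfolding swap_perm_def sp_def by metis
qed

lemma sp_ext1:
  assumes sp: "sp S k \<pi>"
  shows "sp S (Suc k) (\<pi>(Suc k := Suc k))"
  unfolding sp_def
proof
  fix i assume i0: "i \<in> {1..Suc k}"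
  let ?\<sigma> = "\<pi>(Suc k := Suc k)"
  show "?\<sigma> i \<in> {1..Suc k} \<and> ?\<sigma> (?\<sigma> i) = i \<and>
      (?\<sigma> i = i - 1 \<or> ?\<sigma> i = i \<or> ?\<sigma> i = i + 1) \<and> (?\<sigma> i \<noteq> i \<longrightarrow> S (?\<sigma> i) \<noteq> S i)"
  proof (cases "i = Suc k")
    case True then show ?thesis by simp
  next
    case False
    hence i: "i \<in> {1..k}" using i0 by auto
    have h: "\<pi> i \<in> {1..k}" "\<pi> (\<pi> i) = i" "\<pi> i = i - 1 \<or> \<pi> i = i \<or> \<pi> i = i + 1"
       "\<pi> i \<noteq> i \<longrightarrow> S (\<pi> i) \<noteq> S i"
      using sp i unfolding sp_def by blast+
    have "\<pi> i \<noteq> Suc k" using h(1) by auto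
    then have e: "?\<sigma> i = \<pi> i" "?\<sigma> (?\<sigma> i) = \<pi> (\<pi> i)" using False by auto
    show ?thesis unfolding e using h by auto
  qed
qed

lemma sp_ext2:
  assumes sp: "sp S k \<pi>" and ne: "S (Suc k) \<noteq> S (Suc (Suc k))"
  shows "sp S (Suc (Suc k)) (\<pi>(Suc k := Suc (Suc k), Suc (Suc k) := Suc k))"
  unfolding sp_def
proof
  fix i assume i0: "i \<in> {1..Suc (Suc k)}"
  let ?\<sigma> = "\<pi>(Suc k := Suc (Suc k), Suc (Suc k) := Suc k)"
  show "?\<sigma> i \<in> {1..Suc (Suc k)} \<and> ?\<sigma> (?\<sigma> i) = i \<and>
      (?\<sigma> i = i - 1 \<or> ?\<sigma> i = i \<or> ?\<sigma> i = i + 1) \<and> (?\<sigma> i \<noteq> i \<longrightarrow> S (?\<sigma> i) \<noteq> S i)"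
  proof (cases "i = Suc k \<or> i = Suc (Suc k)")
    case True then show ?thesis using ne by auto
  next
    case False
    hence i: "i \<in> {1..k}" using i0 by auto
    have h: "\<pi> i \<in> {1..k}" "\<pi> (\<pi> i) = i" "\<pi> i = i - 1 \<or> \<pi> i = i \<or> \<pi> i = i + 1"
       "\<pi> i \<noteq> i \<longrightarrow> S (\<pi> i) \<noteq> S i"
      using sp i unfolding sp_def by blast+
    have "\<pi> i \<noteq> Suc k" "\<pi> i \<noteq> Suc (Suc k)" using h(1) by auto
    then have e: "?\<sigma> i = \<pi> i" "?\<sigma> (?\<sigma> i) = \<pi> (\<pi> i)" using False by auto
    show ?thesis unfolding e using h by auto
  qed
qed

lemma MM_imp: "MM P T k j \<Longrightarrow> k \<le> j \<and> (\<exists>\<pi>. sp P k \<pi> \<and> (\<forall>m\<in>{1..k}. P (\<pi> m) = T (j - k + m)))"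
proof (induction P T k j rule: MM.induct)
  case (1 P T j)
  then show ?case by (auto simp: sp_def)
next
  case (2 P T j)
  then show ?case by (auto simp: sp_def MM.simps intro!: exI[of _ id])
next
  case (3 P T k j)
  from "3.prems" have kj: "Suc (Suc k) \<le> j" by (simp add: MM.simps)
  from "3.prems" consider (A) "MM P T (Suc k) (j - 1)" "P (Suc (Suc k)) = T j"
    | (B) "MM P T k (j - 2)" "P (Suc k) = T j" "P (Suc (Suc k)) = T (j - 1)"
    by (auto simp: MM.simps)
  then show ?case
  proof cases
    case A
    with "3.IH"(1) obtain \<pi> where sp: "sp P (Suc k) \<pi>"
      and m: "\<forall>m\<in>{1..Suc k}. P (\<pi> m) = T (j - 1 - Suc k + m)" by blast
    show ?thesis
    proof (intro conjI exI)
      show "Suc (Suc k) \<le> j" by fact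
      show "sp P (Suc (Suc k)) (\<pi>(Suc (Suc k) := Suc (Suc k)))" using sp_ext1[OF sp] .
      show "\<forall>m\<in>{1..Suc (Suc k)}. P ((\<pi>(Suc (Suc k) := Suc (Suc k))) m) = T (j - Suc (Suc k) + m)"
      proof
        fix m assume "m \<in> {1..Suc (Suc k)}"
        then consider "m = Suc (Suc k)" | "m \<in> {1..Suc k}" by fastforce
        then show "P ((\<pi>(Suc (Suc k) := Suc (Suc k))) m) = T (j - Suc (Suc k) + m)"
        proof cases
          case 1
          have eq: "j - Suc (Suc k) + Suc (Suc k) = j" using kj by simp
          show ?thesis unfolding 1 fun_upd_same eq using A by simp
        next
          case 2
          have "j - 1 - Suc k + m = j - Suc (Suc k) + m" using kj by simp
          then show ?thesis using 2 m by auto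
        qed
      qed
    qed
  next
    case B
    with "3.IH"(2) obtain \<pi> where sp: "sp P k \<pi>"
      and m: "\<forall>m\<in>{1..k}. P (\<pi> m) = T (j - 2 - k + m)" by blast
    have e: "j - 2 - k + m = j - Suc (Suc k) + m" for m using kj by simp
    show ?thesis
    proof (cases "P (Suc k) = P (Suc (Suc k))")
      case True
      let ?\<sigma> = "\<pi>(Suc k := Suc k, Suc (Suc k) := Suc (Suc k))"
      have s: "sp P (Suc (Suc k)) ?\<sigma>" using sp_ext1[OF sp_ext1[OF sp]] .
      have "\<forall>m\<in>{1..Suc (Suc k)}. P (?\<sigma> m) = T (j - Suc (Suc k) + m)"
      proof
        fix m assume "m \<in> {1..Suc (Suc k)}"
        then consider "m = Suc (Suc k)" | "m = Suc k" | "m \<in> {1..k}" by (auto simp: le_Suc_eq)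
        then show "P (?\<sigma> m) = T (j - Suc (Suc k) + m)"
        proof cases
          case 1
          have eq: "j - Suc (Suc k) + Suc (Suc k) = j" using kj by simp
          show ?thesis unfolding 1 fun_upd_same eq using B True kj by simp
        next
          case 2
          have eq: "j - Suc (Suc k) + Suc k = j - 1" using kj by simp
          show ?thesis unfolding 2 eq using B True kj by simp
        next
          case 3
          hence "?\<sigma> m = \<pi> m" by auto
          then show ?thesis using m e 3 by simp
        qed
      qed
      with s kj show ?thesis by blast
    next
      case False
      let ?\<sigma> = "\<pi>(Suc k := Suc (Suc k), Suc (Suc k) := Suc k)"
      have s: "sp P (Suc (Suc k)) ?\<sigma>" using sp_ext2[OF sp False] .
      have "\<forall>m\<in>{1..Suc (Suc k)}. P (?\<sigma> m) = T (j - Suc (Suc k) + m)"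
      proof
        fix m assume "m \<in> {1..Suc (Suc k)}"
        then consider "m = Suc (Suc k)" | "m = Suc k" | "m \<in> {1..k}" by (auto simp: le_Suc_eq)
        then show "P (?\<sigma> m) = T (j - Suc (Suc k) + m)"
        proof cases
          case 1
          have eq: "j - Suc (Suc k) + Suc (Suc k) = j" using kj by simp
          show ?thesis unfolding 1 fun_upd_same eq using B kj by simp
        next
          case 2
          have eq: "j - Suc (Suc k) + Suc k = j - 1" using kj by simp
          show ?thesis unfolding 2 eq using B kj by simp
        next
          case 3
          hence "?\<sigma> m = \<pi> m" by auto
          then show ?thesis using m e 3 by simp
        qed
      qed
      with s kj show ?thesis by blast
    qed
  qed
qed

lemma sp_restrict: "sp S n \<pi> \<Longrightarrow> m \<le> n \<Longrightarrow> (\<And>i. i \<in> {1..m} \<Longrightarrow> \<pi> i \<le> m) \<Longrightarrow> sp S m \<pi>"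
  unfolding sp_def by (meson atLeastAtMost_iff order_trans)

lemma sp_at: "sp S n \<pi> \<Longrightarrow> i \<in> {1..n} \<Longrightarrow> \<pi> i \<in> {1..n} \<and> \<pi> (\<pi> i) = i \<and>
      (\<pi> i = i - 1 \<or> \<pi> i = i \<or> \<pi> i = i + 1)"
  unfolding sp_def by blast

lemma MM_of: "k \<le> j \<Longrightarrow> sp P k \<pi> \<Longrightarrow> \<forall>m\<in>{1..k}. P (\<pi> m) = T (j - k + m) \<Longrightarrow> MM P T k j"
proof (induction P T k j arbitrary: \<pi> rule: MM.induct)
  case (1 P T j)
  then show ?case by simp
next
  case (2 P T j)
  from sp_at[OF "2.prems"(2), of 1] have "\<pi> 1 = 1" by auto
  with "2.prems" show ?case by (auto simp: MM.simps)
next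
  case (3 P T k j)
  note sp = "3.prems"(2) and mt = "3.prems"(3) and kj = "3.prems"(1)
  have top: "\<pi> (Suc (Suc k)) \<in> {1..Suc (Suc k)}" "\<pi> (\<pi> (Suc (Suc k))) = Suc (Suc k)"
     "\<pi> (Suc (Suc k)) = Suc k \<or> \<pi> (Suc (Suc k)) = Suc (Suc k) \<or> \<pi> (Suc (Suc k)) = Suc (Suc (Suc k))"
    using sp_at[OF sp, of "Suc (Suc k)"] by auto
  have Tj: "T (j - Suc (Suc k) + Suc (Suc k)) = T j" by (simp only: le_add_diff_inverse2[OF kj])
  have Tj1: "T (j - Suc (Suc k) + Suc k) = T (j - 1)"
    using kj by (metis Suc_diff_Suc Suc_le_lessD add_Suc_right diff_Suc_1 le_add_diff_inverse2)
  from top consider (a) "\<pi> (Suc (Suc k)) = Suc (Suc k)" | (b) "\<pi> (Suc (Suc k)) = Suc k" by auto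
  then show ?case
  proof cases
    case a
    have r: "sp P (Suc k) \<pi>"
    proof (rule sp_restrict[OF sp])
      fix i assume i: "i \<in> {1..Suc k}"
      have "\<pi> i \<in> {1..Suc (Suc k)}" "\<pi> (\<pi> i) = i" using sp_at[OF sp, of i] i by auto
      moreover have "\<pi> i \<noteq> Suc (Suc k)" using a i calculation(2) by auto
      ultimately show "\<pi> i \<le> Suc k" by auto
    qed simp
    have "\<forall>m\<in>{1..Suc k}. P (\<pi> m) = T (j - 1 - Suc k + m)"
    proof
      fix m assume m: "m \<in> {1..Suc k}"
      have "j - 1 - Suc k + m = j - Suc (Suc k) + m" using kj by simp
      with mt m show "P (\<pi> m) = T (j - 1 - Suc k + m)" by auto
    qed
    with "3.IH"(1)[OF _ r] kj have M1: "MM P T (Suc k) (j - 1)" by simp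
    have "P (Suc (Suc k)) = T j" using mt[rule_format, of "Suc (Suc k)"] a Tj by simp
    with M1 kj show ?thesis by (simp add: MM.simps)
  next
    case b
    have b2: "\<pi> (Suc k) = Suc (Suc k)" using b top(2) by simp
    have r: "sp P k \<pi>"
    proof (rule sp_restrict[OF sp])
      fix i assume i: "i \<in> {1..k}"
      have "\<pi> i \<in> {1..Suc (Suc k)}" "\<pi> (\<pi> i) = i" using sp_at[OF sp, of i] i by auto
      moreover have "\<pi> i \<noteq> Suc (Suc k)" "\<pi> i \<noteq> Suc k" using b b2 i calculation(2) by auto
      ultimately show "\<pi> i \<le> k" by auto
    qed simp
    have "\<forall>m\<in>{1..k}. P (\<pi> m) = T (j - 2 - k + m)"
    proof
      fix m assume m: "m \<in> {1..k}"
      have "j - 2 - k + m = j - Suc (Suc k) + m" using kj by simp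
      with mt m show "P (\<pi> m) = T (j - 2 - k + m)" by auto
    qed
    with "3.IH"(2)[OF _ r] kj have M0: "MM P T k (j - 2)" by simp
    have "P (Suc k) = T j" using mt[rule_format, of "Suc (Suc k)"] b Tj by simp
    moreover have "P (Suc (Suc k)) = T (j - 1)" using mt[rule_format, of "Suc k"] b2 Tj1 by simp
    ultimately show ?thesis using M0 kj by (simp add: MM.simps)
  qed
qed

lemma gsm_step:
  "RU P p T (Suc j) = band (LSO p (RD P p T j)) (LShift p (mask P p (T (Suc j))))"
  "RM P p T (Suc j) = band (LSO p (bor (RM P p T j) (RU P p T j))) (mask P p (T (Suc j)))"
  "RD P p T (Suc j) = band (LSO p (bor (RM P p T j) (RU P p T j))) (RShift p (mask P p (T (Suc j))))"
  by (simp_all add: RU_def RM_def RD_def case_prod_unfold Let_def)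

lemma gsm_0: "RU P p T 0 i = False" "RM P p T 0 i = False" "RD P p T 0 i = False"
  by (simp_all add: RU_def RM_def RD_def)

lemma inv:
  "(\<forall>i. RM P p T j i = (1 \<le> i \<and> i \<le> p \<and> i \<le> j \<and> MM P T (i-1) (j-1) \<and> P i = T j)) \<and>
   (\<forall>i. RU P p T j i = (2 \<le> i \<and> i \<le> p \<and> i \<le> j \<and> MM P T (i-2) (j-2) \<and> P (i-1) = T j \<and> P i = T (j-1))) \<and>
   (\<forall>i. RD P p T j i = (1 \<le> i \<and> i+1 \<le> p \<and> i \<le> j \<and> MM P T (i-1) (j-1) \<and> P (i+1) = T j))"
proof (induction j)
  case 0
  then show ?case by (simp add: gsm_0)
next
  case (Suc j)
  note IH = Suc.IH[THEN conjunct1, rule_format] Suc.IH[THEN conjunct2, THEN conjunct1, rule_format]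
    Suc.IH[THEN conjunct2, THEN conjunct2, rule_format]
  have RM: "RM P p T (Suc j) i = (1 \<le> i \<and> i \<le> p \<and> i \<le> Suc j \<and> MM P T (i-1) (Suc j-1) \<and> P i = T (Suc j))" for i
  proof (cases i)
    case 0 then show ?thesis by (simp add: gsm_step band_def mask_def)
  next
    case (Suc i')
    show ?thesis
    proof (cases i')
      case 0 then show ?thesis using Suc by (simp add: gsm_step band_def bor_def LSO_def LShift_def e1_def mask_def)
    next
      case (Suc k)
      then show ?thesis using \<open>i = Suc i'\<close>
        by (simp add: gsm_step band_def bor_def LSO_def LShift_def e1_def mask_def IH MM_Suc) auto
    qed
  qed
  have RU: "RU P p T (Suc j) i = (2 \<le> i \<and> i \<le> p \<and> i \<le> Suc j \<and> MM P T (i-2) (Suc j-2) \<and> P (i-1) = T (Suc j) \<and> P i = T (Suc j-1))" for i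
  proof (cases i)
    case 0 then show ?thesis by (simp add: gsm_step band_def LShift_def)
  next
    case (Suc i')
    show ?thesis
    proof (cases i')
      case 0 then show ?thesis using Suc by (simp add: gsm_step band_def LShift_def)
    next
      case (Suc k)
      then show ?thesis using \<open>i = Suc i'\<close>
        by (simp add: gsm_step band_def bor_def LSO_def LShift_def e1_def mask_def IH) auto
    qed
  qed
  have RD: "RD P p T (Suc j) i = (1 \<le> i \<and> i+1 \<le> p \<and> i \<le> Suc j \<and> MM P T (i-1) (Suc j-1) \<and> P (i+1) = T (Suc j))" for i
  proof (cases i)
    case 0 then show ?thesis by (simp add: gsm_step band_def RShift_def)
  next
    case (Suc i')
    show ?thesis
    proof (cases i')
      case 0 then show ?thesis using Suc by (simp add: gsm_step band_def bor_def LSO_def LShift_def RShift_def e1_def mask_def) auto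
    next
      case (Suc k)
      then show ?thesis using \<open>i = Suc i'\<close>
        by (simp add: gsm_step band_def bor_def LSO_def LShift_def RShift_def e1_def mask_def IH MM_Suc) auto
    qed
  qed
  show ?case using RM RU RD by blast
qed

theorem mainTheorem3:
  fixes P T :: "nat \<Rightarrow> 'a::finite" and p t :: nat
  assumes "p \<ge> 1"
  shows "\<forall>j\<in>{1..t}. (RU P p T j p \<or> RM P p T j p) \<longleftrightarrow>
            (j \<ge> p \<and> swap_match P p T (j - p + 1))"
proof
  fix j assume j: "j \<in> {1..t}"
  obtain q where q: "p = Suc q" using assms by (cases p) auto
  have "(RU P p T j p \<or> RM P p T j p) \<longleftrightarrow> MM P T p j"
    using inv[of P p T j] q by (auto simp: MM_Suc)
  also have "\<dots> \<longleftrightarrow> (p \<le> j \<and> (\<exists>\<pi>. sp P p \<pi> \<and> (\<forall>m\<in>{1..p}. P (\<pi> m) = T (j - p + m))))"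
    using MM_imp MM_of by blast
  also have "\<dots> \<longleftrightarrow> (j \<ge> p \<and> swap_match P p T (j - p + 1))"
    unfolding swap_match_def swap_perm_sp by auto
  finally show "(RU P p T j p \<or> RM P p T j p) \<longleftrightarrow> (j \<ge> p \<and> swap_match P p T (j - p + 1))" .
qed

end
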